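(* For real $u,w$ and an integer $n\ge1$ let $g_n(u,w):=\sum_{i=1}^n i\,w^{i-1}u^{n-i}$. For every natural number $m\ge1$: (i) $$g_{4m+1}(w,u)-g_{4m+1}(u,w)=\sum_{i=0}^{2m-1}(4m-2i)(uw)^i\left(u^{4m-2i}-w^{4m-2i}\right)$$ $$=(u+w)\sum_{i=0}^{m-1}(4m-2-4i)\left(u^{4m-1-4i}-w^{4m-1-4i}\right)(uw)^{2i}+2\sum_{i=0}^{m-1}\left(u^{4m-4i}-w^{4m-4i}\right)(uw)^{2i};$$ (ii) $$g_{4m+3}(w,u)-g_{4m+3}(u,w)=\sum_{i=0}^{2m}(4m+2-2i)(uw)^i\left(u^{4m+2-2i}-w^{4m+2-2i}\right)$$ $$=(u+w)\sum_{i=0}^{m-1}(4m-4i)\left(u^{4m+1-4i}-w^{4m+1-4i}\right)(uw)^{2i}+2\sum_{i=0}^{m}\left(u^{4m+2-4i}-w^{4m+2-4i}\right)(uw)^{2i}.$$ Furthermore, let $\beta>0$, $k>0$, and $w=\delta(u)$ with $\delta$ the involution defined in the context. Then for all odd integers $n\ge3$: (a) if $-k<u_0<0$, then $g_n(u,w)>g_n(w,u)$ for all $u\in(0,u_1)$; (b) if $u_0<-k$, then $g_n(u,w)<g_n(w,u)$ for all $u\in(0,k)$.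
   Context: $\Phi(u)=\beta\left(-\frac{u^4}{4}+\frac{k+u_0}{3}u^3-\frac{ku_0}{2}u^2\right)$. Case $-k<u_0<0$: $u_1$ is the unique point of $(0,k)$ with $\Phi(u_1)=\Phi(u_0)$, and for $u\in(0,u_1)$, $\delta(u)$ is the unique $w\in(u_0,0)$ with $\Phi(w)=\Phi(u)$. Case $u_0<-k$: $w_2$ is the unique point of $(u_0,0)$ with $\Phi(w_2)=\Phi(k)$, and for $u\in(0,k)$, $\delta(u)$ is the unique $w\in(w_2,0)$ with $\Phi(w)=\Phi(u)$. *)

theory Defs
  imports Complex_Main
begin

definition g :: "nat \<Rightarrow> real \<Rightarrow> real \<Rightarrow> real" where
  "g n u w = (\<Sum>i=1..n. real i * w ^ (i - 1) * u ^ (n - i))"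

definition Phi :: "real \<Rightarrow> real \<Rightarrow> real \<Rightarrow> real \<Rightarrow> real" where
  "Phi \<beta> k u0 u = \<beta> * (- (u ^ 4) / 4 + (k + u0) / 3 * u ^ 3 - k * u0 / 2 * u ^ 2)"

text \<open>Case -k < u0 < 0: the unique point of (0,k) with the same Phi-value as u0.\<close>
definition u1 :: "real \<Rightarrow> real \<Rightarrow> real \<Rightarrow> real" where
  "u1 \<beta> k u0 = (THE v. v \<in> {0<..<k} \<and> Phi \<beta> k u0 v = Phi \<beta> k u0 u0)"

text \<open>Case u0 < -k: the unique point of (u0,0) with the same Phi-value as k.\<close>
definition w2 :: "real \<Rightarrow> real \<Rightarrow> real \<Rightarrow> real" where
  "w2 \<beta> k u0 = (THE v. v \<in> {u0<..<0} \<and> Phi \<beta> k u0 v = Phi \<beta> k u0 k)"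

definition delta :: "real \<Rightarrow> real \<Rightarrow> real \<Rightarrow> real \<Rightarrow> real" where
  "delta \<beta> k u0 u =
     (if u0 < - k
      then (THE w. w \<in> {w2 \<beta> k u0<..<0} \<and> Phi \<beta> k u0 w = Phi \<beta> k u0 u)
      else (THE w. w \<in> {u0<..<0} \<and> Phi \<beta> k u0 w = Phi \<beta> k u0 u))"

end

theory Submission
  imports Defs
begin


lemma D_eq:
  "g n w u - g n u w = (\<Sum>a<n. (2 * real a + 1 - real n) * u^a * w^(n-1-a))"
proof -
  have 1: "g n w u = (\<Sum>a<n. (real a + 1) * u^a * w^(n-1-a))"
    unfolding g_def by (simp add: sum.atLeast1_atMost_eq add.commute)
  have "g n u w = (\<Sum>a<n. (real a + 1) * w^a * u^(n-1-a))"
    unfolding g_def by (simp add: sum.atLeast1_atMost_eq add.commute)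
  also have "\<dots> = (\<Sum>a<n. (real (n - Suc a) + 1) * w^(n - Suc a) * u^(n-1-(n - Suc a)))"
    by (rule sum.nat_diff_reindex[symmetric])
  also have "\<dots> = (\<Sum>a<n. (real n - real a) * u^a * w^(n-1-a))"
    by (rule sum.cong) (auto simp: of_nat_diff Suc_diff_Suc)
  finally show ?thesis using 1 by (simp add: sum_subtractf[symmetric] algebra_simps)
qed

lemma split_mid:
  fixes f :: "nat \<Rightarrow> real"
  shows "(\<Sum>a<Suc (2*p). f a) = (\<Sum>j<p. f j + f (2*p - j)) + f p"
proof -
  have eq: "{..<Suc (2*p)} = ({..<p} \<union> {p}) \<union> {p<..2*p}" by auto
  have "sum f (({..<p} \<union> {p}) \<union> {p<..2*p}) = sum f ({..<p} \<union> {p}) + sum f {p<..2*p}"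
    by (rule sum.union_disjoint) auto
  moreover have "sum f ({..<p} \<union> {p}) = sum f {..<p} + f p"
    by (subst sum.union_disjoint) auto
  ultimately have "(\<Sum>a<Suc (2*p). f a) = (\<Sum>a<p. f a) + f p + (\<Sum>a\<in>{p<..2*p}. f a)"
    by (simp only: eq)
  moreover have "{p<..2*p} = (\<lambda>j. 2*p - j) ` {..<p}"
  proof
    show "{p<..2*p} \<subseteq> (\<lambda>j. 2*p - j) ` {..<p}"
    proof
      fix x assume "x \<in> {p<..2*p}"
      then have "x = 2*p - (2*p - x)" "2*p - x < p" by auto
      then show "x \<in> (\<lambda>j. 2*p - j) ` {..<p}" by blast
    qed
  qed auto
  moreover have "inj_on (\<lambda>j. 2*p - j) {..<p}" by (auto simp: inj_on_def)
  ultimately show ?thesis by (simp add: sum.reindex sum.distrib)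
qed

lemma B_eq:
  "(\<Sum>a<Suc (2*p). (2 * real a + 1 - real (Suc (2*p))) * u^a * w^(Suc (2*p)-1-a))
   = (\<Sum>j<p. (2 * real p - 2 * real j) * (u*w)^j * (u^(2*p-2*j) - w^(2*p-2*j)))"
proof -
  have "\<And>j. j < p \<Longrightarrow> (2 * real j + 1 - real (Suc (2*p))) * u^j * w^(Suc (2*p)-1-j)
     + (2 * real (2*p-j) + 1 - real (Suc (2*p))) * u^(2*p-j) * w^(Suc (2*p)-1-(2*p-j))
     = (2 * real p - 2 * real j) * (u*w)^j * (u^(2*p-2*j) - w^(2*p-2*j))"
  proof -
    fix j assume j: "j < p"
    obtain e where e: "2*p - 2*j = e" by blast
    have h1: "2*p - j = j + e" "Suc (2*p) - 1 - j = j + e" "Suc (2*p)-1-(2*p-j) = j"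
      "Suc (2*p)-1-(j+e) = j"
      using j e by auto
    have h4: "real (Suc (2*p)) = 2*real j + real e + 1" using j e by (simp add: of_nat_diff)
    have h2: "real (2*p-j) = real j + real e" using h1(1) by simp
    have h3: "2 * real p - 2 * real j = real e" using j e by (auto simp: of_nat_diff)
    show "?thesis j" unfolding h1 h2 e h3 h4
      by (simp add: power_add power_mult_distrib algebra_simps)
  qed
  then show ?thesis unfolding split_mid by (simp del: of_nat_Suc)
qed

lemma pairsplit:
  fixes F :: "nat \<Rightarrow> real"
  shows "(\<Sum>j<2*q. F j) = (\<Sum>i<q. F (2*i) + F (2*i+1))"
  by (induction q) (simp_all add: algebra_simps)

lemma term_id:
  fixes u w :: real
  shows "(real e + 2) * (u*w)^(2*i) * (u^(e+2) - w^(e+2)) + real e * (u*w)^(2*i+1) * (u^e - w^e)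
    = (u + w) * (real e * (u^(e+1) - w^(e+1)) * (u*w)^(2*i)) + 2 * ((u^(e+2) - w^(e+2)) * (u*w)^(2*i))"
  by (simp add: algebra_simps)

lemma E1:
  fixes u w :: real
  shows "(\<Sum>j<2*m. (4 * real m - 2 * real j) * (u*w)^j * (u^(4*m-2*j) - w^(4*m-2*j)))
        = (u + w) * (\<Sum>i<m. (4 * real m - 2 - 4 * real i)
                         * (u^(4*m-1-4*i) - w^(4*m-1-4*i)) * (u*w)^(2*i))
          + 2 * (\<Sum>i<m. (u^(4*m-4*i) - w^(4*m-4*i)) * (u*w)^(2*i))"
proof -
  have "\<And>i. i < m \<Longrightarrow>
    (4 * real m - 2 * real (2*i)) * (u*w)^(2*i) * (u^(4*m-2*(2*i)) - w^(4*m-2*(2*i)))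
    + (4 * real m - 2 * real (2*i+1)) * (u*w)^(2*i+1) * (u^(4*m-2*(2*i+1)) - w^(4*m-2*(2*i+1)))
    = (u + w) * ((4 * real m - 2 - 4 * real i) * (u^(4*m-1-4*i) - w^(4*m-1-4*i)) * (u*w)^(2*i))
      + 2 * ((u^(4*m-4*i) - w^(4*m-4*i)) * (u*w)^(2*i))"
  proof -
    fix i assume i: "i < m"
    obtain e where e: "4*m-4*i-2 = e" by blast
    have h: "4*m-2*(2*i) = e+2" "4*m-2*(2*i+1) = e" "4*m-1-4*i = e+1" "4*m-4*i = e+2"
      using i e by auto
    have r1: "4 * real m - 2 * real (2*i) = real e + 2" using i e by (auto simp: of_nat_diff)
    have r2: "4 * real m - 2 * real (2*i+1) = real e" using i e by (auto simp: of_nat_diff)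
    have r3: "4 * real m - 2 - 4 * real i = real e" using i e by (auto simp: of_nat_diff)
    show "?thesis i" unfolding h r1 r2 r3 by (rule term_id)
  qed
  then show ?thesis
    by (simp add: pairsplit sum_distrib_left sum.distrib[symmetric] del: of_nat_add of_nat_mult)
qed

lemma E2:
  fixes u w :: real
  shows "(\<Sum>j<Suc (2*m). (4 * real m + 2 - 2 * real j) * (u*w)^j * (u^(4*m+2-2*j) - w^(4*m+2-2*j)))
        = (u + w) * (\<Sum>i<m. (4 * real m - 4 * real i)
                         * (u^(4*m+1-4*i) - w^(4*m+1-4*i)) * (u*w)^(2*i))
          + 2 * (\<Sum>i<Suc m. (u^(4*m+2-4*i) - w^(4*m+2-4*i)) * (u*w)^(2*i))"
proof -
  have "\<And>i. i < m \<Longrightarrow>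
    (4 * real m + 2 - 2 * real (2*i)) * (u*w)^(2*i) * (u^(4*m+2-2*(2*i)) - w^(4*m+2-2*(2*i)))
    + (4 * real m + 2 - 2 * real (2*i+1)) * (u*w)^(2*i+1) * (u^(4*m+2-2*(2*i+1)) - w^(4*m+2-2*(2*i+1)))
    = (u + w) * ((4 * real m - 4 * real i) * (u^(4*m+1-4*i) - w^(4*m+1-4*i)) * (u*w)^(2*i))
      + 2 * ((u^(4*m+2-4*i) - w^(4*m+2-4*i)) * (u*w)^(2*i))"
  proof -
    fix i assume i: "i < m"
    obtain e where e: "4*m-4*i = e" by blast
    have h: "4*m+2-2*(2*i) = e+2" "4*m+2-2*(2*i+1) = e" "4*m+1-4*i = e+1" "4*m+2-4*i = e+2"
      using i e by auto
    have r1: "4 * real m + 2 - 2 * real (2*i) = real e + 2" using i e by (auto simp: of_nat_diff)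
    have r2: "4 * real m + 2 - 2 * real (2*i+1) = real e" using i e by (auto simp: of_nat_diff)
    have r3: "4 * real m - 4 * real i = real e" using i e by (auto simp: of_nat_diff)
    show "?thesis i" unfolding h r1 r2 r3 by (rule term_id)
  qed
  then have "(\<Sum>j<2*m. (4 * real m + 2 - 2 * real j) * (u*w)^j * (u^(4*m+2-2*j) - w^(4*m+2-2*j)))
     = (u + w) * (\<Sum>i<m. (4 * real m - 4 * real i)
                         * (u^(4*m+1-4*i) - w^(4*m+1-4*i)) * (u*w)^(2*i))
          + 2 * (\<Sum>i<m. (u^(4*m+2-4*i) - w^(4*m+2-4*i)) * (u*w)^(2*i))"
    by (simp add: pairsplit sum_distrib_left sum.distrib[symmetric] del: of_nat_add of_nat_mult)
  then show ?thesis by (simp add: algebra_simps)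
qed

lemma Dform:
  "g (Suc (2*p)) w u - g (Suc (2*p)) u w
   = (\<Sum>j<p. (2 * real p - 2 * real j) * (u*w)^j * (u^(2*p-2*j) - w^(2*p-2*j)))"
  unfolding D_eq by (rule B_eq)

lemma odd_pos:
  fixes u w :: real
  assumes "u > 0" "w < 0" "odd N"
  shows "u^N - w^N > 0"
proof -
  have "w^N < 0" using assms by (simp add: power_less_zero_eq)
  moreover have "u^N > 0" using assms by simp
  ultimately show ?thesis by linarith
qed

lemma even_pos:
  fixes u w :: real
  assumes "u > 0" "w < 0" "even N" "N > 0" "u + w > 0"
  shows "u^N - w^N > 0"
proof -
  have "w^N = (-w)^N" using assms by (simp add: power_minus_even)
  moreover have "(-w)^N < u^N" using assms by (intro power_strict_mono) auto
  ultimately show ?thesis by simp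
qed

lemma even_neg:
  fixes u w :: real
  assumes "u > 0" "w < 0" "even N" "N > 0" "u + w < 0"
  shows "u^N - w^N < 0"
proof -
  have "w^N = (-w)^N" using assms by (simp add: power_minus_even)
  moreover have "u^N < (-w)^N" using assms by (intro power_strict_mono) auto
  ultimately show ?thesis by simp
qed

lemma uw_pos:
  fixes u w :: real
  assumes "u > 0" "w < 0"
  shows "(u*w)^(2*i) > 0"
proof -
  have "(u*w)^2 > 0" using assms by simp
  then show ?thesis by (simp add: power_mult)
qed

lemma D_sign:
  fixes u w :: real
  assumes n: "odd n" "n \<ge> 3" and uw: "u > 0" "w < 0"
  shows "u + w > 0 \<Longrightarrow> g n w u - g n u w > 0"
    and "u + w < 0 \<Longrightarrow> g n w u - g n u w < 0"
proof -
  obtain p where p0: "n = Suc (2*p)" using n(1) by (metis oddE Suc_eq_plus1)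
  have p: "n = Suc (2*p)" "p \<ge> 1" using p0 n(2) by auto
  have cases: "(\<exists>m. m \<ge> 1 \<and> p = 2*m) \<or> (\<exists>m. p = Suc (2*m))"
    using p(2) by presburger
  have D: "g n w u - g n u w = (\<Sum>j<p. (2 * real p - 2 * real j) * (u*w)^j * (u^(2*p-2*j) - w^(2*p-2*j)))"
    unfolding p(1) by (rule Dform)
  show "u + w > 0 \<Longrightarrow> g n w u - g n u w > 0"
  proof -
    assume s: "u + w > 0"
    from cases show ?thesis
    proof
      assume "\<exists>m. m \<ge> 1 \<and> p = 2*m"
      then obtain m where m: "m \<ge> 1" "p = 2*m" by blast
      have "g n w u - g n u w = (u + w) * (\<Sum>i<m. (4 * real m - 2 - 4 * real i)
                         * (u^(4*m-1-4*i) - w^(4*m-1-4*i)) * (u*w)^(2*i))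
          + 2 * (\<Sum>i<m. (u^(4*m-4*i) - w^(4*m-4*i)) * (u*w)^(2*i))"
        unfolding D m(2) E1[symmetric] by (simp add: mult.assoc)
      moreover have "(\<Sum>i<m. (4 * real m - 2 - 4 * real i)
                         * (u^(4*m-1-4*i) - w^(4*m-1-4*i)) * (u*w)^(2*i)) \<ge> 0"
      proof (intro sum_nonneg)
        fix i assume i: "i \<in> {..<m}"
        have "4 * real m - 2 - 4 * real i > 0" using i by simp
        moreover have "odd (4*m-1-4*i)"
        proof -
          have "4*m-1-4*i = Suc (2*(2*m-2*i-1))" using i by auto
          then show ?thesis by simp
        qed
        ultimately show "(4 * real m - 2 - 4 * real i)
                         * (u^(4*m-1-4*i) - w^(4*m-1-4*i)) * (u*w)^(2*i) \<ge> 0"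
          using odd_pos[OF uw] uw_pos[OF uw] by (simp add: less_imp_le)
      qed
      moreover have "(\<Sum>i<m. (u^(4*m-4*i) - w^(4*m-4*i)) * (u*w)^(2*i)) > 0"
      proof (intro sum_pos)
        fix i assume i: "i \<in> {..<m}"
        have "4*m-4*i = 2*(2*m-2*i)" "4*m-4*i > 0" using i by auto
        then have "even (4*m-4*i)" "4*m-4*i > 0" by simp_all
        then show "(u^(4*m-4*i) - w^(4*m-4*i)) * (u*w)^(2*i) > 0"
          using even_pos[OF uw _ _ s] uw_pos[OF uw] by simp
      qed (insert m, auto simp: lessThan_empty_iff)
      ultimately show ?thesis using s by (simp add: add_nonneg_pos)
    next
      assume "\<exists>m. p = Suc (2*m)"
      then obtain m where m: "p = Suc (2*m)" by blast
      have "g n w u - g n u w = (u + w) * (\<Sum>i<m. (4 * real m - 4 * real i)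
                         * (u^(4*m+1-4*i) - w^(4*m+1-4*i)) * (u*w)^(2*i))
          + 2 * (\<Sum>i<Suc m. (u^(4*m+2-4*i) - w^(4*m+2-4*i)) * (u*w)^(2*i))"
        unfolding D m E2[symmetric] by (simp add: mult.assoc algebra_simps)
      moreover have "(\<Sum>i<m. (4 * real m - 4 * real i)
                         * (u^(4*m+1-4*i) - w^(4*m+1-4*i)) * (u*w)^(2*i)) \<ge> 0"
      proof (intro sum_nonneg)
        fix i assume i: "i \<in> {..<m}"
        have "4 * real m - 4 * real i > 0" using i by simp
        moreover have "odd (4*m+1-4*i)"
        proof -
          have "4*m+1-4*i = Suc (2*(2*m-2*i))" using i by auto
          then show ?thesis by simp
        qed
        ultimately show "(4 * real m - 4 * real i)
                         * (u^(4*m+1-4*i) - w^(4*m+1-4*i)) * (u*w)^(2*i) \<ge> 0"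
          using odd_pos[OF uw] uw_pos[OF uw] by (simp add: less_imp_le)
      qed
      moreover have "(\<Sum>i<Suc m. (u^(4*m+2-4*i) - w^(4*m+2-4*i)) * (u*w)^(2*i)) > 0"
      proof (intro sum_pos)
        fix i assume i: "i \<in> {..<Suc m}"
        have "4*m+2-4*i = 2*(2*m+1-2*i)" "4*m+2-4*i > 0" using i by auto
        then have "even (4*m+2-4*i)" "4*m+2-4*i > 0" by simp_all
        then show "(u^(4*m+2-4*i) - w^(4*m+2-4*i)) * (u*w)^(2*i) > 0"
          using even_pos[OF uw _ _ s] uw_pos[OF uw] by simp
      qed auto
      ultimately show ?thesis using s by (simp add: add_nonneg_pos)
    qed
  qed
  show "u + w < 0 \<Longrightarrow> g n w u - g n u w < 0"
  proof -
    assume s: "u + w < 0"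
    from cases show ?thesis
    proof
      assume "\<exists>m. m \<ge> 1 \<and> p = 2*m"
      then obtain m where m: "m \<ge> 1" "p = 2*m" by blast
      have "g n w u - g n u w = (u + w) * (\<Sum>i<m. (4 * real m - 2 - 4 * real i)
                         * (u^(4*m-1-4*i) - w^(4*m-1-4*i)) * (u*w)^(2*i))
          + 2 * (\<Sum>i<m. (u^(4*m-4*i) - w^(4*m-4*i)) * (u*w)^(2*i))"
        unfolding D m(2) E1[symmetric] by (simp add: mult.assoc)
      moreover have "(\<Sum>i<m. (4 * real m - 2 - 4 * real i)
                         * (u^(4*m-1-4*i) - w^(4*m-1-4*i)) * (u*w)^(2*i)) \<ge> 0"
      proof (intro sum_nonneg)
        fix i assume i: "i \<in> {..<m}"
        have "4 * real m - 2 - 4 * real i > 0" using i by simp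
        moreover have "odd (4*m-1-4*i)"
        proof -
          have "4*m-1-4*i = Suc (2*(2*m-2*i-1))" using i by auto
          then show ?thesis by simp
        qed
        ultimately show "(4 * real m - 2 - 4 * real i)
                         * (u^(4*m-1-4*i) - w^(4*m-1-4*i)) * (u*w)^(2*i) \<ge> 0"
          using odd_pos[OF uw] uw_pos[OF uw] by (simp add: less_imp_le)
      qed
      moreover have "(\<Sum>i<m. - ((u^(4*m-4*i) - w^(4*m-4*i)) * (u*w)^(2*i))) > 0"
      proof (intro sum_pos)
        fix i assume i: "i \<in> {..<m}"
        have "4*m-4*i = 2*(2*m-2*i)" "4*m-4*i > 0" using i by auto
        then have "even (4*m-4*i)" "4*m-4*i > 0" by simp_all
        then show "- ((u^(4*m-4*i) - w^(4*m-4*i)) * (u*w)^(2*i)) > 0"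
          using even_neg[OF uw _ _ s] uw_pos[OF uw] by (simp add: mult_neg_pos)
      qed (insert m, auto simp: lessThan_empty_iff)
      ultimately show ?thesis using s mult_nonpos_nonneg[of "u+w"] unfolding sum_negf by (smt (verit))
    next
      assume "\<exists>m. p = Suc (2*m)"
      then obtain m where m: "p = Suc (2*m)" by blast
      have "g n w u - g n u w = (u + w) * (\<Sum>i<m. (4 * real m - 4 * real i)
                         * (u^(4*m+1-4*i) - w^(4*m+1-4*i)) * (u*w)^(2*i))
          + 2 * (\<Sum>i<Suc m. (u^(4*m+2-4*i) - w^(4*m+2-4*i)) * (u*w)^(2*i))"
        unfolding D m E2[symmetric] by (simp add: mult.assoc algebra_simps)
      moreover have "(\<Sum>i<m. (4 * real m - 4 * real i)
                         * (u^(4*m+1-4*i) - w^(4*m+1-4*i)) * (u*w)^(2*i)) \<ge> 0"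
      proof (intro sum_nonneg)
        fix i assume i: "i \<in> {..<m}"
        have "4 * real m - 4 * real i > 0" using i by simp
        moreover have "odd (4*m+1-4*i)"
        proof -
          have "4*m+1-4*i = Suc (2*(2*m-2*i))" using i by auto
          then show ?thesis by simp
        qed
        ultimately show "(4 * real m - 4 * real i)
                         * (u^(4*m+1-4*i) - w^(4*m+1-4*i)) * (u*w)^(2*i) \<ge> 0"
          using odd_pos[OF uw] uw_pos[OF uw] by (simp add: less_imp_le)
      qed
      moreover have "(\<Sum>i<Suc m. - ((u^(4*m+2-4*i) - w^(4*m+2-4*i)) * (u*w)^(2*i))) > 0"
      proof (intro sum_pos)
        fix i assume i: "i \<in> {..<Suc m}"
        have "4*m+2-4*i = 2*(2*m+1-2*i)" "4*m+2-4*i > 0" using i by auto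
        then have "even (4*m+2-4*i)" "4*m+2-4*i > 0" by simp_all
        then show "- ((u^(4*m+2-4*i) - w^(4*m+2-4*i)) * (u*w)^(2*i)) > 0"
          using even_neg[OF uw _ _ s] uw_pos[OF uw] by (simp add: mult_neg_pos)
      qed auto
      ultimately show ?thesis using s mult_nonpos_nonneg[of "u+w"] unfolding sum_negf by (smt (verit))
    qed
  qed
qed



lemma Phi_deriv:
  "(Phi b k u0 has_real_derivative (- b * x * (x - k) * (x - u0))) (at x)"
proof -
  have "(Phi b k u0 has_real_derivative
     b * (- (4 * x^3) / 4 + (k + u0) / 3 * (3 * x^2) - k * u0 / 2 * (2 * x))) (at x)"
    unfolding Phi_def[abs_def] by (auto intro!: derivative_eq_intros simp: power2_eq_square)
  moreover have "b * (- (4 * x^3) / 4 + (k + u0) / 3 * (3 * x^2) - k * u0 / 2 * (2 * x))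
     = - b * x * (x - k) * (x - u0)" by (simp add: algebra_simps power2_eq_square power3_eq_cube)
  ultimately show ?thesis by simp
qed

lemma Phi_cont: "continuous_on S (Phi b k u0)"
  unfolding Phi_def[abs_def] by (intro continuous_intros) auto

lemma Phi_dec:
  assumes "b > 0" "k > 0" "u0 \<le> x" "x < y" "y \<le> 0"
  shows "Phi b k u0 y < Phi b k u0 x"
proof (rule DERIV_neg_imp_decreasing_open[OF assms(4) _ Phi_cont])
  fix t assume t: "x < t" "t < y"
  have "b * (-t) * (k - t) * (t - u0) > 0" using assms t by (intro mult_pos_pos) auto
  then have "- b * t * (t - k) * (t - u0) < 0" by (simp add: algebra_simps)
  then show "\<exists>d. (Phi b k u0 has_real_derivative d) (at t) \<and> d < 0" using Phi_deriv by blast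
qed

lemma Phi_inc:
  assumes "b > 0" "u0 < 0" "0 \<le> x" "x < y" "y \<le> k"
  shows "Phi b k u0 x < Phi b k u0 y"
proof (rule DERIV_pos_imp_increasing_open[OF assms(4) _ Phi_cont])
  fix t assume t: "x < t" "t < y"
  have "b * t * (k - t) * (t - u0) > 0" using assms t by (intro mult_pos_pos) auto
  then have "- b * t * (t - k) * (t - u0) > 0" by (simp add: algebra_simps)
  then show "\<exists>d. (Phi b k u0 has_real_derivative d) (at t) \<and> d > 0" using Phi_deriv by blast
qed

lemma Phi_0: "Phi b k u0 0 = 0" by (simp add: Phi_def)

lemma Phi_sym: "Phi b k u0 (-x) - Phi b k u0 x = - 2 * b * (k + u0) / 3 * x^3"
  unfolding Phi_def by (simp add: power_minus_odd field_simps)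

lemma Phi_k_u0: "Phi b k u0 k - Phi b k u0 u0 = b / 12 * (k^2 - u0^2) * (k - u0)^2"
  unfolding Phi_def by (simp add: field_simps) (simp add: algebra_simps power2_eq_square power3_eq_cube power4_eq_xxxx)

lemma dec_inj:
  assumes "b > 0" "k > 0" "u0 \<le> x" "x \<le> 0" "u0 \<le> y" "y \<le> 0" "Phi b k u0 x = Phi b k u0 y"
  shows "x = y"
proof (rule ccontr)
  assume "x \<noteq> y"
  then consider "x < y" | "y < x" by linarith
  then show False
  proof cases
    case 1 then show False using Phi_dec[of b k u0 x y] assms by simp
  next
    case 2 then show False using Phi_dec[of b k u0 y x] assms by simp
  qed
qed

lemma inc_inj:
  assumes "b > 0" "u0 < 0" "0 \<le> x" "x \<le> k" "0 \<le> y" "y \<le> k" "Phi b k u0 x = Phi b k u0 y"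
  shows "x = y"
proof (rule ccontr)
  assume "x \<noteq> y"
  then consider "x < y" | "y < x" by linarith
  then show False
  proof cases
    case 1 then show False using Phi_inc[of b u0 x y k] assms by simp
  next
    case 2 then show False using Phi_inc[of b u0 y x k] assms by simp
  qed
qed

lemma caseA:
  assumes b: "b > 0" and k: "k > 0" and u0: "- k < u0" "u0 < 0"
    and u: "0 < u" "u < u1 b k u0"
  shows "u + delta b k u0 u < 0" "delta b k u0 u < 0"
proof -
  let ?P = "Phi b k u0"
  have Pu0: "?P u0 > 0" using Phi_dec[of b k u0 u0 0] b k u0 by (simp add: Phi_0)
  have "(-u0)^2 < k^2" using u0 by (intro power_strict_mono) auto
  then have sq: "k^2 - u0^2 > 0" by simp
  have "?P k - ?P u0 > 0" unfolding Phi_k_u0 using b k u0 sq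
    by (intro mult_pos_pos) auto
  then have Pk: "?P u0 < ?P k" by simp
  obtain v where v: "0 \<le> v" "v \<le> k" "?P v = ?P u0"
    using IVT'[of ?P 0 "?P u0" k, OF _ _ _ Phi_cont] Pu0 Pk k by (auto simp: Phi_0)
  have v2: "0 < v" "v < k" using v Pu0 Pk by (auto simp: Phi_0 less_le)
  have U1: "u1 b k u0 = v"
    unfolding u1_def
  proof (rule the_equality)
    show "v \<in> {0<..<k} \<and> ?P v = ?P u0" using v v2 by simp
    fix y assume "y \<in> {0<..<k} \<and> ?P y = ?P u0"
    then show "y = v" using inc_inj[of b u0 y k v] b u0 v by auto
  qed
  have vlt: "v < - u0"
  proof (rule ccontr)
    assume "\<not> v < - u0"
    then have "?P (-u0) \<le> ?P v"
      using Phi_inc[of b u0 "-u0" v k] b u0 v2 by (cases "v = -u0") auto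
    moreover have "?P (-u0) - ?P u0 > 0"
    proof -
      have "- 2 * b * (k + u0) / 3 * u0^3 > 0"
      proof -
        have "u0^3 < 0" using u0 by (simp add: power_less_zero_eq)
        moreover have "2 * b * (k + u0) / 3 > 0" using b u0 by simp
        ultimately show ?thesis by (simp add: mult_pos_neg)
      qed
      then show ?thesis using Phi_sym[of b k u0 u0] by simp
    qed
    ultimately show False using v by simp
  qed
  have ulv: "u < v" using u U1 by simp
  have Pu: "0 < ?P u" "?P u < ?P u0"
    using Phi_inc[of b u0 0 u k] Phi_inc[of b u0 u v k] b u0 u ulv v v2 by (auto simp: Phi_0)
  obtain w where w: "u0 \<le> w" "w \<le> 0" "?P w = ?P u"
    using IVT2'[of ?P 0 "?P u" u0, OF _ _ _ Phi_cont] Pu u0 by (auto simp: Phi_0)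
  have w2: "u0 < w" "w < 0" using w Pu by (auto simp: Phi_0 less_le)
  have D: "delta b k u0 u = w"
    unfolding delta_def using u0
  proof (simp, intro the_equality)
    show "u0 < w \<and> w < 0 \<and> ?P w = ?P u" using w w2 by simp
    fix y assume "u0 < y \<and> y < 0 \<and> ?P y = ?P u"
    then show "y = w" using dec_inj[of b k u0 y w] b k w w2 by auto
  qed
  have "w < - u"
  proof (rule ccontr)
    assume "\<not> w < - u"
    then have "?P w \<le> ?P (-u)"
      using Phi_dec[of b k u0 "-u" w] b k u ulv vlt w2 by (cases "w = -u") auto
    moreover have "?P (-u) - ?P u < 0"
    proof -
      have "- 2 * b * (k + u0) / 3 * u^3 < 0"
      proof -
        have "u^3 > 0" using u by simp
        moreover have "2 * b * (k + u0) / 3 > 0" using b u0 by simp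
        ultimately show ?thesis by (simp add: mult_pos_pos)
      qed
      then show ?thesis using Phi_sym[of b k u0 u] by simp
    qed
    ultimately show False using w by simp
  qed
  then show "u + delta b k u0 u < 0" "delta b k u0 u < 0" using D w2 by auto
qed


lemma caseB:
  assumes b: "b > 0" and k: "k > 0" and u0: "u0 < - k"
    and u: "0 < u" "u < k"
  shows "u + delta b k u0 u > 0" "delta b k u0 u < 0"
proof -
  let ?P = "Phi b k u0"
  have u0n: "u0 < 0" using u0 k by simp
  have "k^2 < (-u0)^2" using u0 k by (intro power_strict_mono) auto
  then have sq: "k^2 - u0^2 < 0" by simp
  have "(k - u0)^2 > 0" using u0 k by simp
  then have "?P k - ?P u0 < 0" unfolding Phi_k_u0 using b sq
    by (simp add: mult_pos_neg mult_neg_pos)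
  then have Pk: "?P k < ?P u0" by simp
  have Pk0: "0 < ?P k" using Phi_inc[of b u0 0 k k] b u0n k by (simp add: Phi_0)
  obtain z where z: "u0 \<le> z" "z \<le> 0" "?P z = ?P k"
    using IVT2'[of ?P 0 "?P k" u0, OF _ _ _ Phi_cont] Pk Pk0 u0n by (auto simp: Phi_0)
  have z2: "u0 < z" "z < 0" using z Pk Pk0 by (auto simp: Phi_0 less_le)
  have W2: "w2 b k u0 = z"
    unfolding w2_def
  proof (rule the_equality)
    show "z \<in> {u0<..<0} \<and> ?P z = ?P k" using z z2 by simp
    fix y assume "y \<in> {u0<..<0} \<and> ?P y = ?P k"
    then show "y = z" using dec_inj[of b k u0 y z] b k z z2 by auto
  qed
  have Pu: "0 < ?P u" "?P u < ?P k"
    using Phi_inc[of b u0 0 u k] Phi_inc[of b u0 u k k] b u0n u by (auto simp: Phi_0)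
  obtain w where w: "z \<le> w" "w \<le> 0" "?P w = ?P u"
    using IVT2'[of ?P 0 "?P u" z, OF _ _ _ Phi_cont] Pu z z2 by (auto simp: Phi_0)
  have w2: "z < w" "w < 0" using w Pu z by (auto simp: Phi_0 less_le)
  have D: "delta b k u0 u = w"
    unfolding delta_def W2 using u0
  proof (simp, intro the_equality)
    show "z < w \<and> w < 0 \<and> ?P w = ?P u" using w w2 by simp
    fix y assume "z < y \<and> y < 0 \<and> ?P y = ?P u"
    then show "y = w" using dec_inj[of b k u0 y w] b k w w2 z2 by auto
  qed
  have "- u < w"
  proof (rule ccontr)
    assume "\<not> - u < w"
    then have "?P (-u) \<le> ?P w"
      using Phi_dec[of b k u0 w "-u"] b k u u0 w2 z2 by (cases "w = -u") auto
    moreover have "?P (-u) - ?P u > 0"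
    proof -
      have "- 2 * b * (k + u0) / 3 * u^3 > 0"
      proof -
        have "u^3 > 0" using u by simp
        moreover have "2 * b * (k + u0) / 3 < 0" using b u0 by (simp add: mult_pos_neg)
        ultimately show ?thesis by (simp add: mult_neg_pos)
      qed
      then show ?thesis using Phi_sym[of b k u0 u] by simp
    qed
    ultimately show False using w by simp
  qed
  then show "u + delta b k u0 u > 0" "delta b k u0 u < 0" using D w2 by auto
qed


lemma I1:
  assumes "m \<ge> 1"
  shows "g (4*m+1) w u - g (4*m+1) u w
        = (\<Sum>i=0..2*m-1. (4 * real m - 2 * real i) * (u*w)^i * (u^(4*m-2*i) - w^(4*m-2*i)))"
proof -
  have s: "{0..2*m-1} = {..<2*m}" using assms by auto
  have "g (Suc (2*(2*m))) w u - g (Suc (2*(2*m))) u w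
     = (\<Sum>j<2*m. (2 * real (2*m) - 2 * real j) * (u*w)^j * (u^(2*(2*m)-2*j) - w^(2*(2*m)-2*j)))"
    by (rule Dform)
  moreover have "Suc (2*(2*m)) = 4*m+1" "2*(2*m) = 4*m" "2 * real (2*m) = 4 * real m" by auto
  ultimately show ?thesis unfolding s by simp
qed

lemma I3:
  shows "g (4*m+3) w u - g (4*m+3) u w
        = (\<Sum>i=0..2*m. (4 * real m + 2 - 2 * real i) * (u*w)^i * (u^(4*m+2-2*i) - w^(4*m+2-2*i)))"
proof -
  have s: "{0..2*m} = {..<Suc (2*m)}" by auto
  have "g (Suc (2*(Suc (2*m)))) w u - g (Suc (2*(Suc (2*m)))) u w
     = (\<Sum>j<Suc (2*m). (2 * real (Suc (2*m)) - 2 * real j) * (u*w)^j * (u^(2*(Suc (2*m))-2*j) - w^(2*(Suc (2*m))-2*j)))"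
    by (rule Dform)
  moreover have "Suc (4*m+2) = 4*m+3" "2*(Suc (2*m)) = 4*m+2" "2 * real (Suc (2*m)) = 4 * real m + 2" by auto
  ultimately show ?thesis by (simp only: s)
qed

theorem lemma3p9:
  shows
  "(\<forall>(m::nat) (u::real) (w::real). m \<ge> 1 \<longrightarrow>
      g (4*m+1) w u - g (4*m+1) u w
        = (\<Sum>i=0..2*m-1. (4 * real m - 2 * real i) * (u*w)^i * (u^(4*m-2*i) - w^(4*m-2*i)))
    \<and> (\<Sum>i=0..2*m-1. (4 * real m - 2 * real i) * (u*w)^i * (u^(4*m-2*i) - w^(4*m-2*i)))
        = (u + w) * (\<Sum>i=0..m-1. (4 * real m - 2 - 4 * real i)
                         * (u^(4*m-1-4*i) - w^(4*m-1-4*i)) * (u*w)^(2*i))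
          + 2 * (\<Sum>i=0..m-1. (u^(4*m-4*i) - w^(4*m-4*i)) * (u*w)^(2*i))
    \<and> g (4*m+3) w u - g (4*m+3) u w
        = (\<Sum>i=0..2*m. (4 * real m + 2 - 2 * real i) * (u*w)^i * (u^(4*m+2-2*i) - w^(4*m+2-2*i)))
    \<and> (\<Sum>i=0..2*m. (4 * real m + 2 - 2 * real i) * (u*w)^i * (u^(4*m+2-2*i) - w^(4*m+2-2*i)))
        = (u + w) * (\<Sum>i=0..m-1. (4 * real m - 4 * real i)
                         * (u^(4*m+1-4*i) - w^(4*m+1-4*i)) * (u*w)^(2*i))
          + 2 * (\<Sum>i=0..m. (u^(4*m+2-4*i) - w^(4*m+2-4*i)) * (u*w)^(2*i)))
   \<and> (\<forall>(\<beta>::real) (k::real) (u0::real) (n::nat). \<beta> > 0 \<and> k > 0 \<and> odd n \<and> n \<ge> 3 \<longrightarrow>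
        ((- k < u0 \<and> u0 < 0) \<longrightarrow>
           (\<forall>u. 0 < u \<and> u < u1 \<beta> k u0 \<longrightarrow>
              g n u (delta \<beta> k u0 u) > g n (delta \<beta> k u0 u) u))
      \<and> (u0 < - k \<longrightarrow>
           (\<forall>u. 0 < u \<and> u < k \<longrightarrow>
              g n u (delta \<beta> k u0 u) < g n (delta \<beta> k u0 u) u)))"
  proof (intro conjI allI impI)
  fix m :: nat and u w :: real assume m: "m \<ge> 1"
  have s1: "{0..2*m-1} = {..<2*m}" "{0..m-1} = {..<m}" using m by auto
  have s2: "{0..2*m} = {..<Suc (2*m)}" "{0..m} = {..<Suc m}" by auto
  show "g (4*m+1) w u - g (4*m+1) u w
        = (\<Sum>i=0..2*m-1. (4 * real m - 2 * real i) * (u*w)^i * (u^(4*m-2*i) - w^(4*m-2*i)))"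
    by (rule I1[OF m])
  show "(\<Sum>i=0..2*m-1. (4 * real m - 2 * real i) * (u*w)^i * (u^(4*m-2*i) - w^(4*m-2*i)))
        = (u + w) * (\<Sum>i=0..m-1. (4 * real m - 2 - 4 * real i)
                         * (u^(4*m-1-4*i) - w^(4*m-1-4*i)) * (u*w)^(2*i))
          + 2 * (\<Sum>i=0..m-1. (u^(4*m-4*i) - w^(4*m-4*i)) * (u*w)^(2*i))"
    unfolding s1 by (rule E1)
  show "g (4*m+3) w u - g (4*m+3) u w
        = (\<Sum>i=0..2*m. (4 * real m + 2 - 2 * real i) * (u*w)^i * (u^(4*m+2-2*i) - w^(4*m+2-2*i)))"
    by (rule I3)
  show "(\<Sum>i=0..2*m. (4 * real m + 2 - 2 * real i) * (u*w)^i * (u^(4*m+2-2*i) - w^(4*m+2-2*i)))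
        = (u + w) * (\<Sum>i=0..m-1. (4 * real m - 4 * real i)
                         * (u^(4*m+1-4*i) - w^(4*m+1-4*i)) * (u*w)^(2*i))
          + 2 * (\<Sum>i=0..m. (u^(4*m+2-4*i) - w^(4*m+2-4*i)) * (u*w)^(2*i))"
    unfolding s1 s2 by (rule E2)
next
  fix \<beta> k u0 :: real and n :: nat and u :: real
  assume H: "\<beta> > 0 \<and> k > 0 \<and> odd n \<and> n \<ge> 3"
    and a: "- k < u0 \<and> u0 < 0" and u: "0 < u \<and> u < u1 \<beta> k u0"
  have c: "u + delta \<beta> k u0 u < 0" "delta \<beta> k u0 u < 0"
    using caseA[of \<beta> k u0 u] H a u by auto
  have "g n (delta \<beta> k u0 u) u - g n u (delta \<beta> k u0 u) < 0"
    using D_sign(2)[of n u "delta \<beta> k u0 u"] H u c by auto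
  then show "g n u (delta \<beta> k u0 u) > g n (delta \<beta> k u0 u) u" by simp
next
  fix \<beta> k u0 :: real and n :: nat and u :: real
  assume H: "\<beta> > 0 \<and> k > 0 \<and> odd n \<and> n \<ge> 3"
    and a: "u0 < - k" and u: "0 < u \<and> u < k"
  have c: "u + delta \<beta> k u0 u > 0" "delta \<beta> k u0 u < 0"
    using caseB[of \<beta> k u0 u] H a u by auto
  have "g n (delta \<beta> k u0 u) u - g n u (delta \<beta> k u0 u) > 0"
    using D_sign(1)[of n u "delta \<beta> k u0 u"] H u c by auto
  then show "g n u (delta \<beta> k u0 u) < g n (delta \<beta> k u0 u) u" by simp
qed

end
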